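(* Let $a>1$ be an integer that is a zero divisor in $\mathbb{Z}/m\mathbb{Z}$, let $k\ge1$ with $a^k\mid m$, and let $(K_n,\alpha)$ be an edge-labeled complete graph over $\mathbb{Z}/m\mathbb{Z}$ with ordered edge labels $a^{i_1},\dots,a^{i_{r_n}}$ such that either $a^{i_{r_n}}\mid a^{i_{r_n-1}}\mid\cdots\mid a^{i_1}\mid a^k$ with $i_{r_n}\ge1$ and $i_1<k$, or $a^{i_1}\mid a^{i_2}\mid\cdots\mid a^{i_{r_n}}\mid a^k$ with $i_1\ge1$ and $i_{r_n}<k$. Then for every connected spanning subgraph $H$ of $K_n$, equipped with the restriction of $\alpha$ to its edges, $\operatorname{rk}[\mathbb{Z}/m\mathbb{Z}]_{(H,\alpha)}=n$.
   Context: A spline on an edge-labeled graph $(G,\alpha)$ over $\mathbb{Z}/m\mathbb{Z}$ (edges labeled by nonzero ideals) is a vector $(f_{v_1},\dots,f_{v_n})\in(\mathbb{Z}/m\mathbb{Z})^n$ with $f_{v_i}-f_{v_j}\in\alpha(v_iv_j)$ for every edge; the splines form a $\mathbb{Z}$-module $[\mathbb{Z}/m\mathbb{Z}]_{(G,\alpha)}$, whose rank $\operatorname{rk}$ is the smallest size of a generating set. $K_n$ is the complete graph on $v_1,\dots,v_n$; $r_k=k(k-1)/2$; for $1\le j<k\le n$ the edge $v_jv_k$ is $e_{r_{k-1}+j}$. "Ordered edge labels $l_1,\dots,l_{r_n}$" means $\alpha(e_s)$ is the ideal generated by $l_s+m\mathbb{Z}$. *)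

theory Defs
  imports "HOL-Number_Theory.Cong"
begin

definition r :: "nat \<Rightarrow> nat" where
  "r k = k * (k - 1) div 2"

(* Edges of K_n on vertices v_1..v_n are encoded as pairs (j,k) with 1 \<le> j < k \<le> n;
   the edge v_j v_k is e_{r_{k-1}+j}. *)
definition Kn_edges :: "nat \<Rightarrow> (nat \<times> nat) set" where
  "Kn_edges n = {(j, k). 1 \<le> j \<and> j < k \<and> k \<le> n}"

definition edge_index :: "nat \<Rightarrow> nat \<Rightarrow> nat" where
  "edge_index j k = r (k - 1) + j"

definition connected_spanning :: "nat \<Rightarrow> (nat \<times> nat) set \<Rightarrow> bool" where
  "connected_spanning n E \<longleftrightarrow> E \<subseteq> Kn_edges n \<and>
     (\<forall>u \<in> {1..n}. \<forall>v \<in> {1..n}.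
        (\<lambda>x y. (x, y) \<in> E \<or> (y, x) \<in> E)\<^sup>*\<^sup>* u v)"

(* Elements of Z/mZ are represented by their canonical representatives in {0..<m};
   a vector in (Z/mZ)^n is a function nat => int supported on {1..n} with such values.
   lab j k is the integer generator l of the label (l + mZ) of edge v_j v_k (j < k). *)
definition splines :: "int \<Rightarrow> nat \<Rightarrow> (nat \<times> nat) set \<Rightarrow> (nat \<Rightarrow> nat \<Rightarrow> int)
    \<Rightarrow> (nat \<Rightarrow> int) set" where
  "splines m n E lab = {f. (\<forall>v \<in> {1..n}. 0 \<le> f v \<and> f v < m) \<and>
     (\<forall>v. v \<notin> {1..n} \<longrightarrow> f v = 0) \<and>
     (\<forall>(j, k) \<in> E. \<exists>c::int. [f j - f k = c * lab j k] (mod m))}"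

definition generates :: "int \<Rightarrow> nat \<Rightarrow> (nat \<Rightarrow> int) set \<Rightarrow> (nat \<Rightarrow> int) set \<Rightarrow> bool" where
  "generates m n G S \<longleftrightarrow> (\<forall>f \<in> S. \<exists>c :: (nat \<Rightarrow> int) \<Rightarrow> int.
      \<forall>v \<in> {1..n}. f v = (\<Sum>g \<in> G. c g * g v) mod m)"

definition rk :: "int \<Rightarrow> nat \<Rightarrow> (nat \<Rightarrow> int) set \<Rightarrow> nat" where
  "rk m n S = (LEAST t. \<exists>G. G \<subseteq> S \<and> finite G \<and> card G = t \<and> generates m n G S)"

definition zero_divisor_mod :: "int \<Rightarrow> int \<Rightarrow> bool" where
  "zero_divisor_mod m a \<longleftrightarrow> \<not> [a = 0] (mod m) \<and>
     (\<exists>b. \<not> [b = 0] (mod m) \<and> [a * b = 0] (mod m))"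

end

theory Submission
  imports Defs "HOL-Library.FuncSet"
begin

lemma spl_lin:
  assumes "m > 0" "f \<in> splines m n E lab" "g \<in> splines m n E lab"
  shows "(\<lambda>v. (x * f v + y * g v) mod m) \<in> splines m n E lab"
proof -
  have fs: "\<exists>c::int. [f j - f k = c * lab j k] (mod m)" if "(j, k) \<in> E" for j k
    using assms(2) that unfolding splines_def by auto
  have gs: "\<exists>c::int. [g j - g k = c * lab j k] (mod m)" if "(j, k) \<in> E" for j k
    using assms(3) that unfolding splines_def by auto
  have f0: "\<forall>v. v \<notin> {1..n} \<longrightarrow> f v = 0" and g0: "\<forall>v. v \<notin> {1..n} \<longrightarrow> g v = 0"
    using assms unfolding splines_def by auto
  have ex: "\<exists>c::int. [(x * f j + y * g j) mod m - (x * f k + y * g k) mod m = c * lab j k] (mod m)"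
    if jk: "(j, k) \<in> E" for j k
  proof -
    obtain c1 where c1: "[f j - f k = c1 * lab j k] (mod m)" using fs[OF jk] by (elim exE)
    obtain c2 where c2: "[g j - g k = c2 * lab j k] (mod m)" using gs[OF jk] by (elim exE)
    have "[(x * f j + y * g j) mod m - (x * f k + y * g k) mod m
          = x * (f j - f k) + y * (g j - g k)] (mod m)"
      by (simp add: cong_def mod_diff_eq algebra_simps)
    also have "[x * (f j - f k) + y * (g j - g k) = x * (c1 * lab j k) + y * (c2 * lab j k)] (mod m)"
      by (intro cong_add cong_mult cong_refl c1 c2)
    also have "x * (c1 * lab j k) + y * (c2 * lab j k) = (x * c1 + y * c2) * lab j k"
      by (simp add: algebra_simps)
    finally show ?thesis by blast
  qed
  have e: "\<forall>(j, k) \<in> E. \<exists>c::int. [(x * f j + y * g j) mod m - (x * f k + y * g k) mod m = c * lab j k] (mod m)"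
  proof (clarify)
    fix j k assume "(j, k) \<in> E" then show "\<exists>c::int. [(x * f j + y * g j) mod m - (x * f k + y * g k) mod m = c * lab j k] (mod m)"
      by (rule ex)
  qed
  have r1: "\<forall>v \<in> {1..n}. 0 \<le> (x * f v + y * g v) mod m \<and> (x * f v + y * g v) mod m < m"
    using assms(1) by simp
  have r2: "\<forall>v. v \<notin> {1..n} \<longrightarrow> (x * f v + y * g v) mod m = 0"
    using f0 g0 by simp
  show ?thesis unfolding splines_def mem_Collect_eq by (intro conjI r1 r2 e)
qed
lemma spl_zero: "m > 0 \<Longrightarrow> (\<lambda>v. 0) \<in> splines m n E lab"
proof -
  assume m: "m > 0"
  have "\<forall>(j, k) \<in> E. \<exists>c::int. [0 - 0 = c * lab j k] (mod m)"
  proof (clarify)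
    fix j k show "\<exists>c::int. [0 - 0 = c * lab j k] (mod m)"
      by (rule exI[of _ 0]) simp
  qed
  then show ?thesis unfolding splines_def mem_Collect_eq using m by simp
qed
lemma spl_fin:
  assumes "m > 0" shows "finite (splines m n E lab)"
proof -
  have "splines m n E lab \<subseteq> (\<lambda>g v. if v \<in> {1..n} then g v else 0) ` (PiE {1..n} (\<lambda>_. {0..<m}))"
  proof
    fix f assume f: "f \<in> splines m n E lab"
    have "f = (\<lambda>v. if v \<in> {1..n} then restrict f {1..n} v else 0)"
      using f unfolding splines_def by auto
    moreover have "restrict f {1..n} \<in> PiE {1..n} (\<lambda>_. {0..<m})"
      using f unfolding splines_def by auto
    ultimately show "f \<in> (\<lambda>g v. if v \<in> {1..n} then g v else 0) ` (PiE {1..n} (\<lambda>_. {0..<m}))"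
      by blast
  qed
  moreover have "finite (PiE {1..n} (\<lambda>_. {0..<m::int}))" by (intro finite_PiE) auto
  ultimately show ?thesis using finite_subset by blast
qed

lemma spl_sum:
  assumes "m > 0" "finite G" "G \<subseteq> splines m n E lab"
  shows "(\<lambda>v. (\<Sum>g\<in>G. e g * g v) mod m) \<in> splines m n E lab"
  using assms(2,3)
proof (induction G rule: finite_induct)
  case empty then show ?case using spl_zero[of m n E lab] assms(1) by simp
next
  case (insert g G)
  have "(\<lambda>v. (e g * g v + 1 * ((\<Sum>g\<in>G. e g * g v) mod m)) mod m) \<in> splines m n E lab"
    using insert assms(1) by (intro spl_lin) auto
  moreover have "(\<lambda>v. (e g * g v + 1 * ((\<Sum>g\<in>G. e g * g v) mod m)) mod m)
     = (\<lambda>v. (\<Sum>g\<in>insert g G. e g * g v) mod m)"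
    using insert by (simp add: mod_add_right_eq)
  ultimately show ?case by simp
qed

lemma upper_aux:
  fixes m :: int and n :: nat and E :: "(nat \<times> nat) set" and lab :: "nat \<Rightarrow> nat \<Rightarrow> int"
    and S :: "(nat \<Rightarrow> int) set"
  defines "S \<equiv> splines m n E lab"
  defines "T \<equiv> \<lambda>j. {f \<in> S. \<forall>v \<in> {1..j}. f v = 0}"
  assumes m: "m > 0"
  shows "n - j = d \<Longrightarrow> j \<le> n \<Longrightarrow> \<exists>G \<subseteq> T j. finite G \<and> card G \<le> n - j \<and>
      (\<forall>f \<in> T j. \<exists>c. \<forall>v \<in> {1..n}. f v = (\<Sum>g \<in> G. c g * g v) mod m)"
proof (induction d arbitrary: j)
  case 0
  then have "j = n" by simp
  show ?case
    apply (rule exI[of _ "{}"])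
    using \<open>j = n\<close> by (auto simp: T_def)
next
  case (Suc d)
  define V where "V = Suc j"
  have jn: "j < n" and d: "n - Suc j = d" using Suc.prems by auto
  from Suc.IH[OF d] obtain G where G: "G \<subseteq> T (Suc j)" "finite G" "card G \<le> n - Suc j"
    and Gg: "\<forall>f \<in> T (Suc j). \<exists>c. \<forall>v \<in> {1..n}. f v = (\<Sum>g \<in> G. c g * g v) mod m"
    using jn by auto
  have TS: "T (Suc j) \<subseteq> T j" unfolding T_def by auto
  have Tsuc: "f \<in> T (Suc j) \<longleftrightarrow> f \<in> T j \<and> f V = 0" for f
    unfolding T_def V_def by (auto simp: le_Suc_eq)
  show ?case
  proof (cases "\<exists>f \<in> T j. f V \<noteq> 0")
    case False
    then have "T j = T (Suc j)" using Tsuc by auto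
    then show ?thesis using G Gg by (intro exI[of _ G]) auto
  next
    case True
    then obtain f1 where f1: "f1 \<in> T j" "f1 V \<noteq> 0" by blast
    have Sr: "f \<in> S \<Longrightarrow> 0 \<le> f V \<and> f V < m" for f
      using jn unfolding S_def splines_def V_def by auto
    have "f1 V > 0" using Sr[of f1] f1 unfolding T_def by auto
    define P where "P = (\<lambda>x::nat. x > 0 \<and> (\<exists>f \<in> T j. f V = int x))"
    have "P (nat (f1 V))" unfolding P_def using f1 \<open>f1 V > 0\<close> by auto
    define \<delta> where "\<delta> = (LEAST x. P x)"
    have P\<delta>: "P \<delta>" unfolding \<delta>_def by (rule LeastI) fact
    have \<delta>min: "P x \<Longrightarrow> \<delta> \<le> x" for x unfolding \<delta>_def by (rule Least_le)
    from P\<delta> obtain g0 where g0: "g0 \<in> T j" "g0 V = int \<delta>" "\<delta> > 0" unfolding P_def by auto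
    have g0S: "g0 \<in> S" using g0 unfolding T_def by auto
    have g0nG: "g0 \<notin> G" using G(1) Tsuc g0 by auto
    have main: "\<exists>c. \<forall>v \<in> {1..n}. f v = (\<Sum>g \<in> insert g0 G. c g * g v) mod m" if f: "f \<in> T j" for f
    proof -
      have fS: "f \<in> S" using f unfolding T_def by auto
      define q where "q = f V div int \<delta>"
      define h where "h = (\<lambda>v. (f v - q * g0 v) mod m)"
      have "(\<lambda>v. (1 * f v + (- q) * g0 v) mod m) \<in> S"
        unfolding S_def by (rule spl_lin[OF m]) (use fS g0S S_def in auto)
      moreover have "(\<lambda>v. (1 * f v + (- q) * g0 v) mod m) = h"
        unfolding h_def by (rule ext) simp
      ultimately have hS: "h \<in> S" by simp
      have hz: "\<forall>v \<in> {1..j}. h v = 0" using f g0 unfolding h_def T_def by auto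
      have hV: "h V = f V mod int \<delta>"
      proof -
        have "f V - q * g0 V = f V mod int \<delta>" unfolding q_def g0(2)
          by (metis minus_div_mult_eq_mod)
        moreover have "0 \<le> f V mod int \<delta>" using g0(3) by simp
        moreover have "f V mod int \<delta> < m"
        proof -
          have "f V mod int \<delta> < int \<delta>" using g0(3) by simp
          moreover have "int \<delta> < m" using g0(2) Sr[OF g0S] by simp
          ultimately show ?thesis by linarith
        qed
        ultimately show ?thesis unfolding h_def by simp
      qed
      have "h V = 0"
      proof (rule ccontr)
        assume "h V \<noteq> 0"
        moreover have "0 \<le> h V" using hV g0(3) by simp
        ultimately have hpos: "h V > 0" by linarith
        then have "P (nat (h V))" unfolding P_def using hS hz by (auto simp: T_def)
        then have "\<delta> \<le> nat (h V)" by (rule \<delta>min)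
        moreover have "h V < int \<delta>" using hV g0(3) by simp
        ultimately show False using hpos by (simp add: le_nat_iff)
      qed
      then have "h \<in> T (Suc j)" using Tsuc hS hz T_def by auto
      then obtain c where c: "\<forall>v \<in> {1..n}. h v = (\<Sum>g \<in> G. c g * g v) mod m" using Gg by blast
      define c' where "c' = c(g0 := q)"
      have "f v = (\<Sum>g \<in> insert g0 G. c' g * g v) mod m" if v: "v \<in> {1..n}" for v
      proof -
        have "(\<Sum>g \<in> insert g0 G. c' g * g v) = q * g0 v + (\<Sum>g \<in> G. c g * g v)"
          using G(2) g0nG unfolding c'_def by (simp add: sum.insert del: fun_upd_apply) (auto intro!: sum.cong)
        note sumeq = this
        have "f v = f v mod m" using fS v unfolding S_def splines_def by auto
        also have "\<dots> = (q * g0 v + (f v - q * g0 v)) mod m" by simp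
        also have "\<dots> = (q * g0 v + h v) mod m"
          unfolding h_def by (rule mod_add_right_eq[symmetric])
        also have "\<dots> = (q * g0 v + (\<Sum>g \<in> G. c g * g v) mod m) mod m" using c v by simp
        also have "\<dots> = (q * g0 v + (\<Sum>g \<in> G. c g * g v)) mod m"
          by (rule mod_add_right_eq)
        also have "\<dots> = (\<Sum>g \<in> insert g0 G. c' g * g v) mod m" using sumeq by simp
        finally show ?thesis .
      qed
      then show ?thesis by blast
    qed
    show ?thesis
    proof (intro exI[of _ "insert g0 G"] conjI)
      show "insert g0 G \<subseteq> T j" using G(1) TS g0 by auto
      show "finite (insert g0 G)" using G by auto
      show "card (insert g0 G) \<le> n - j" using G g0nG jn by simp
      show "\<forall>f\<in>T j. \<exists>c. \<forall>v\<in>{1..n}. f v = (\<Sum>g\<in>insert g0 G. c g * g v) mod m"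
        using main by blast
    qed
  qed
qed

lemma upper:
  assumes "m > 0"
  shows "\<exists>G \<subseteq> splines m n E lab. finite G \<and> card G \<le> n \<and> generates m n G (splines m n E lab)"
  using upper_aux[OF assms, of n 0 n E lab] unfolding generates_def by auto


lemma spl_mod: "m > 0 \<Longrightarrow> f \<in> splines m n E lab \<Longrightarrow> f v mod m = f v"
  unfolding splines_def by (cases "v \<in> {1..n}") auto

lemma lower:
  fixes m p :: int
  assumes m: "m > 0" and p: "p > 1" and pm: "p dvd m"
    and labdvd: "\<And>j k. (j, k) \<in> E \<Longrightarrow> lab j k dvd (m div p)"
    and GS: "G \<subseteq> splines m n E lab" and fin: "finite G"
    and gen: "generates m n G (splines m n E lab)"
  shows "n \<le> card G"
proof -
  define S where "S = splines m n E lab"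
  define q where "q = m div p"
  have mq: "m = p * q" using pm by (simp add: q_def)
  have q0: "q > 0" using m p mq by (simp add: zero_less_mult_iff)
  define \<mu> where "\<mu> = (\<lambda>f::nat \<Rightarrow> int. (\<lambda>v. (p * f v) mod m))"
  define K where "K = {f \<in> S. \<mu> f = (\<lambda>v. 0)}"
  have finS: "finite S" using spl_fin[OF m] S_def by simp
  have Smod: "f \<in> S \<Longrightarrow> f v mod m = f v" for f v using spl_mod[OF m] S_def by simp
  have \<mu>S: "\<mu> f \<in> S" if "f \<in> S" for f
  proof -
    have "(\<lambda>v. (p * f v + 0 * f v) mod m) \<in> S" unfolding S_def
      by (rule spl_lin[OF m]) (use that S_def in auto)
    then show ?thesis unfolding \<mu>_def by simp
  qed
  have zS: "(\<lambda>v. 0) \<in> S" unfolding S_def by (rule spl_zero[OF m])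
  have fib: "card K \<le> card {f \<in> S. \<mu> f = y}" if y: "y \<in> \<mu> ` S" for y
  proof -
    obtain f0 where f0: "f0 \<in> S" "y = \<mu> f0" using y by blast
    define \<tau> where "\<tau> = (\<lambda>x::nat \<Rightarrow> int. (\<lambda>v. (1 * x v + 1 * f0 v) mod m))"
    have \<tau>S: "\<tau> x \<in> S" if "x \<in> S" for x
      unfolding \<tau>_def S_def by (rule spl_lin[OF m]) (use that f0 S_def in auto)
    have \<tau>\<mu>: "\<mu> (\<tau> x) = y" if x: "x \<in> K" for x
    proof (rule ext)
      fix v
      have x0: "(p * x v) mod m = 0" using x unfolding K_def \<mu>_def by (metis (mono_tags) mem_Collect_eq)
      have "(p * ((x v + f0 v) mod m)) mod m = (p * x v + p * f0 v) mod m"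
        by (simp add: mod_mult_right_eq distrib_left)
      also have "\<dots> = ((p * x v) mod m + (p * f0 v) mod m) mod m" by (simp add: mod_add_eq)
      also have "\<dots> = (p * f0 v) mod m" using x0 by simp
      finally show "\<mu> (\<tau> x) v = y v" unfolding \<tau>_def \<mu>_def f0(2) by simp
    qed
    have inj: "inj_on \<tau> K"
    proof (rule inj_onI)
      fix x x' assume x: "x \<in> K" and x': "x' \<in> K" and eq: "\<tau> x = \<tau> x'"
      show "x = x'"
      proof (rule ext)
        fix v
        have "(x v + f0 v) mod m = (x' v + f0 v) mod m" using fun_cong[OF eq, of v] unfolding \<tau>_def by simp
        then have "[x v + f0 v = x' v + f0 v] (mod m)" by (simp add: cong_def)
        then have "[x v = x' v] (mod m)" by (metis cong_add_rcancel)
        then have "x v mod m = x' v mod m" by (simp add: cong_def)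
        then show "x v = x' v" using Smod x x' unfolding K_def by auto
      qed
    qed
    have "\<tau> ` K \<subseteq> {f \<in> S. \<mu> f = y}" using \<tau>S \<tau>\<mu> unfolding K_def by auto
    moreover have "finite {f \<in> S. \<mu> f = y}" using finS by simp
    ultimately show ?thesis using inj card_inj_on_le by blast
  qed
  have SU: "S = (\<Union>y \<in> \<mu> ` S. {f \<in> S. \<mu> f = y})" by auto
  have "card S = (\<Sum>y \<in> \<mu> ` S. card {f \<in> S. \<mu> f = y})"
    by (subst SU, rule card_UN_disjoint) (use finS in auto)
  moreover have "card (\<mu> ` S) * card K \<le> (\<Sum>y \<in> \<mu> ` S. card {f \<in> S. \<mu> f = y})"
    using sum_bounded_below[of "\<mu> ` S" "card K" "\<lambda>y. card {f \<in> S. \<mu> f = y}"] fib by simp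
  ultimately have stepA: "card K * card (\<mu> ` S) \<le> card S" by (simp add: mult.commute)
  define W where "W = PiE G (\<lambda>_. {0..<p})"
  have cardW: "card W = nat p ^ card G" unfolding W_def using fin by (simp add: card_PiE)
  have finW: "finite W" unfolding W_def using fin by (intro finite_PiE) auto
  define \<Phi> where "\<Phi> = (\<lambda>(c, y). (\<lambda>v::nat. ((\<Sum>g\<in>G. c g * g v) + y v) mod m))"
  have cover: "S \<subseteq> \<Phi> ` (W \<times> \<mu> ` S)"
  proof
    fix f assume f: "f \<in> S"
    obtain d where d: "\<forall>v \<in> {1..n}. f v = (\<Sum>g \<in> G. d g * g v) mod m"
      using gen f unfolding generates_def S_def by blast
    define c where "c = restrict (\<lambda>g. d g mod p) G"
    have cW: "c \<in> W" unfolding c_def W_def using p by auto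
    define h where "h = (\<lambda>v. (\<Sum>g\<in>G. (d g div p) * g v) mod m)"
    have hS: "h \<in> S" unfolding h_def S_def by (rule spl_sum[OF m fin GS])
    have "f = \<Phi> (c, \<mu> h)"
    proof (rule ext)
      fix v
      have "\<Phi> (c, \<mu> h) v = ((\<Sum>g\<in>G. c g * g v) + (p * ((\<Sum>g\<in>G. (d g div p) * g v) mod m)) mod m) mod m"
        unfolding \<Phi>_def \<mu>_def h_def by simp
      also have "\<dots> = ((\<Sum>g\<in>G. c g * g v) + p * (\<Sum>g\<in>G. (d g div p) * g v)) mod m"
        by (simp add: mod_add_right_eq mod_mult_right_eq)
      also have "(\<Sum>g\<in>G. c g * g v) + p * (\<Sum>g\<in>G. (d g div p) * g v) = (\<Sum>g\<in>G. d g * g v)"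
      proof -
        have "p * (\<Sum>g\<in>G. (d g div p) * g v) = (\<Sum>g\<in>G. p * (d g div p) * g v)"
          by (simp add: sum_distrib_left mult.assoc)
        moreover have "(\<Sum>g\<in>G. c g * g v) + (\<Sum>g\<in>G. p * (d g div p) * g v)
            = (\<Sum>g\<in>G. c g * g v + p * (d g div p) * g v)"
          by (rule sum.distrib[symmetric])
        moreover have "\<dots> = (\<Sum>g\<in>G. d g * g v)"
        proof (rule sum.cong[OF refl])
          fix g assume "g \<in> G"
          then have "c g = d g mod p" unfolding c_def by simp
          then show "c g * g v + p * (d g div p) * g v = d g * g v"
            by (metis distrib_right mod_mult_div_eq)
        qed
        ultimately show ?thesis by simp
      qed
      finally have \<Phi>v: "\<Phi> (c, \<mu> h) v = (\<Sum>g\<in>G. d g * g v) mod m" .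
      show "f v = \<Phi> (c, \<mu> h) v"
      proof (cases "v \<in> {1..n}")
        case True then show ?thesis using d \<Phi>v by simp
      next
        case False
        have z: "g v = 0" if "g \<in> G" for g using GS that False unfolding splines_def by auto
        have "(\<Sum>g\<in>G. d g * g v) = 0" by (rule sum.neutral) (simp add: z)
        moreover have "f v = 0" using f False unfolding S_def splines_def by auto
        ultimately show ?thesis using \<Phi>v by simp
      qed
    qed
    then show "f \<in> \<Phi> ` (W \<times> \<mu> ` S)" using cW hS by blast
  qed
  have "card S \<le> card (\<Phi> ` (W \<times> \<mu> ` S))"
    by (rule card_mono) (use finW finS cover in auto)
  also have "\<dots> \<le> card (W \<times> \<mu> ` S)" by (rule card_image_le) (use finW finS in auto)
  also have "\<dots> = nat p ^ card G * card (\<mu> ` S)" by (simp add: card_cartesian_product cardW)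
  finally have stepB: "card S \<le> nat p ^ card G * card (\<mu> ` S)" .
  define \<iota> where "\<iota> = (\<lambda>g::nat \<Rightarrow> int. (\<lambda>v. if v \<in> {1..n} then g v * q else 0))"
  define X where "X = PiE {1..n} (\<lambda>_. {0..<p})"
  have cardX: "card X = nat p ^ n" unfolding X_def by (simp add: card_PiE)
  have \<iota>K: "\<iota> g \<in> K" if g: "g \<in> X" for g
  proof -
    have rng: "0 \<le> g v \<and> g v < p" if "v \<in> {1..n}" for v using g that unfolding X_def by auto
    have vals: "0 \<le> \<iota> g v \<and> \<iota> g v < m" if "v \<in> {1..n}" for v
    proof -
      have "g v * q \<le> (p - 1) * q" using rng[OF that] q0 by (intro mult_right_mono) auto
      then show ?thesis using rng[OF that] q0 that mq unfolding \<iota>_def by (auto simp: algebra_simps)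
    qed
    have form: "\<exists>t. \<iota> g v = t * q" for v unfolding \<iota>_def by auto
    have edges: "\<exists>c::int. [\<iota> g j - \<iota> g k = c * lab j k] (mod m)" if jk: "(j, k) \<in> E" for j k
    proof -
      obtain tj tk where "\<iota> g j = tj * q" "\<iota> g k = tk * q" using form by blast
      moreover obtain r where "q = lab j k * r" using labdvd[OF jk] unfolding q_def by (elim dvdE)
      ultimately have "\<iota> g j - \<iota> g k = ((tj - tk) * r) * lab j k" by (simp add: algebra_simps)
      then show ?thesis by (intro exI[of _ "(tj - tk) * r"]) simp
    qed
    have e: "\<forall>(j, k) \<in> E. \<exists>c::int. [\<iota> g j - \<iota> g k = c * lab j k] (mod m)"
    proof (clarify)
      fix j k assume "(j, k) \<in> E" then show "\<exists>c::int. [\<iota> g j - \<iota> g k = c * lab j k] (mod m)"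
        by (rule edges)
    qed
    have out: "\<forall>v. v \<notin> {1..n} \<longrightarrow> \<iota> g v = 0" unfolding \<iota>_def by simp
    have inS: "\<iota> g \<in> S" unfolding S_def splines_def mem_Collect_eq
      by (intro conjI e out ballI vals)
    have "\<mu> (\<iota> g) = (\<lambda>v. 0)"
    proof (rule ext)
      fix v
      have e1: "p * (g v * q) = g v * m" using mq by (simp add: algebra_simps)
      have e2: "p * (g v * q) mod m = 0" unfolding e1 by simp
      show "\<mu> (\<iota> g) v = 0" unfolding \<mu>_def \<iota>_def using e2 by simp
    qed
    then show ?thesis using inS unfolding K_def by simp
  qed
  have injX: "inj_on \<iota> X"
  proof (rule inj_onI)
    fix g g' assume g: "g \<in> X" and g': "g' \<in> X" and eq: "\<iota> g = \<iota> g'"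
    show "g = g'"
    proof (rule ext)
      fix v
      show "g v = g' v"
      proof (cases "v \<in> {1..n}")
        case True
        then have "g v * q = g' v * q" using fun_cong[OF eq, of v] unfolding \<iota>_def by simp
        then show ?thesis using q0 by simp
      next
        case False
        then show ?thesis using g g' unfolding X_def by (auto simp: PiE_def extensional_def)
      qed
    qed
  qed
  have finK: "finite K" using finS unfolding K_def by simp
  have stepC: "nat p ^ n \<le> card K"
    using card_inj_on_le[OF injX _ finK] \<iota>K cardX by auto
  have pos: "card (\<mu> ` S) > 0" using finS zS by (auto simp: card_gt_0_iff)
  have "nat p ^ n * card (\<mu> ` S) \<le> nat p ^ card G * card (\<mu> ` S)"
    using stepA stepB stepC by (meson le_trans mult_le_mono1)
  then have "nat p ^ n \<le> nat p ^ card G" using pos by simp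
  then show ?thesis by (rule power_le_imp_le_exp[rotated]) (use p in simp)
qed


lemma r_Suc: "r (Suc x) = r x + x"
proof -
  have "Suc x * x = x * (x - 1) + 2 * x" by (cases x) (simp_all add: algebra_simps)
  then show ?thesis unfolding r_def by simp
qed

lemma r_mono: "a \<le> b \<Longrightarrow> r a \<le> r b"
proof (induction b)
  case 0 then show ?case by simp
next
  case (Suc b) then show ?case by (cases "a = Suc b") (auto simp: r_Suc)
qed

lemma edge_index_range:
  assumes "1 \<le> j" "j < k" "k \<le> n"
  shows "1 \<le> edge_index j k \<and> edge_index j k \<le> r n"
proof -
  obtain k' where k': "k = Suc k'" using assms by (cases k) auto
  have "edge_index j k = r k' + j" unfolding edge_index_def k' by simp
  moreover have "r k' + j \<le> r k' + k'" using assms k' by simp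
  moreover have "r k' + k' = r k" using k' r_Suc by simp
  moreover have "r k \<le> r n" using assms r_mono by simp
  ultimately show ?thesis using assms by simp
qed

theorem mainTheorem6:
  fixes m a :: int and k n :: nat and i :: "nat \<Rightarrow> nat" and E :: "(nat \<times> nat) set"
  assumes "m > 0" and "a > 1" and "zero_divisor_mod m a"
    and "k \<ge> 1" and "a ^ k dvd m"
    and "n \<ge> 2"
    and "((\<forall>s \<in> {1..<r n}. a ^ i (s + 1) dvd a ^ i s) \<and> a ^ i 1 dvd a ^ k
           \<and> i (r n) \<ge> 1 \<and> i 1 < k)
       \<or> ((\<forall>s \<in> {1..<r n}. a ^ i s dvd a ^ i (s + 1)) \<and> a ^ i (r n) dvd a ^ k
           \<and> i 1 \<ge> 1 \<and> i (r n) < k)"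
    and "connected_spanning n E"
  shows "rk m n (splines m n E (\<lambda>j l. a ^ i (edge_index j l))) = n"
proof -
  define lab where "lab = (\<lambda>j l. a ^ i (edge_index j l))"
  define S where "S = splines m n E lab"
  note m = assms(1) and a1 = assms(2) and k1 = assms(4) and akm = assms(5)
  have alls: "a ^ i s dvd a ^ (k - 1)" if s: "1 \<le> s" "s \<le> r n" for s
    using assms(7)
  proof
    assume h: "(\<forall>s \<in> {1..<r n}. a ^ i (s + 1) dvd a ^ i s) \<and> a ^ i 1 dvd a ^ k
           \<and> i (r n) \<ge> 1 \<and> i 1 < k"
    have "a ^ i s dvd a ^ i 1" using s
    proof (induction s)
      case 0 then show ?case by simp
    next
      case (Suc s)
      show ?case
      proof (cases "s = 0")
        case True then show ?thesis by simp
      next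
        case False
        then have "a ^ i (s + 1) dvd a ^ i s" using h Suc.prems by auto
        moreover have "a ^ i s dvd a ^ i 1" using Suc False by simp
        ultimately show ?thesis by (simp add: dvd_trans[of _ "a ^ i s"])
      qed
    qed
    moreover have "a ^ i 1 dvd a ^ (k - 1)"
    proof -
      have "i 1 < k" using h by blast
      then show ?thesis by (intro le_imp_power_dvd) simp
    qed
    ultimately show ?thesis by (rule dvd_trans)
  next
    assume h: "(\<forall>s \<in> {1..<r n}. a ^ i s dvd a ^ i (s + 1)) \<and> a ^ i (r n) dvd a ^ k
           \<and> i 1 \<ge> 1 \<and> i (r n) < k"
    have "\<forall>s. r n - s = d \<longrightarrow> 1 \<le> s \<longrightarrow> s \<le> r n \<longrightarrow> a ^ i s dvd a ^ i (r n)" for d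
    proof (induction d)
      case 0 then show ?case by (auto intro: le_antisym)
    next
      case (Suc d)
      show ?case
      proof (intro allI impI)
        fix s assume s: "r n - s = Suc d" "1 \<le> s" "s \<le> r n"
        then have "a ^ i s dvd a ^ i (s + 1)" using h by auto
        moreover have "a ^ i (s + 1) dvd a ^ i (r n)" using Suc.IH s by auto
        ultimately show "a ^ i s dvd a ^ i (r n)" by (rule dvd_trans)
      qed
    qed
    then have "a ^ i s dvd a ^ i (r n)" using s by blast
    moreover have "a ^ i (r n) dvd a ^ (k - 1)"
    proof -
      have "i (r n) < k" using h by blast
      then show ?thesis by (intro le_imp_power_dvd) simp
    qed
    ultimately show ?thesis by (rule dvd_trans)
  qed
  have akm1: "a ^ (k - 1) dvd m div a"
  proof -
    obtain t where t: "m = a ^ k * t" using akm by (elim dvdE)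
    have "a ^ k = a * a ^ (k - 1)" using k1 by (metis Suc_diff_le diff_Suc_1 power_Suc)
    then have "m div a = a ^ (k - 1) * t" using t a1 by simp
    then show ?thesis by simp
  qed
  have labdvd: "lab j l dvd m div a" if "(j, l) \<in> E" for j l
  proof -
    have "(j, l) \<in> Kn_edges n" using assms(8) that unfolding connected_spanning_def by auto
    then have "1 \<le> j" "j < l" "l \<le> n" unfolding Kn_edges_def by auto
    then have "1 \<le> edge_index j l" "edge_index j l \<le> r n" using edge_index_range by auto
    then have "lab j l dvd a ^ (k - 1)" unfolding lab_def by (rule alls)
    then show ?thesis using akm1 by (rule dvd_trans)
  qed
  have "a dvd a ^ k" using k1 by (intro dvd_power) simp
  then have adm: "a dvd m" using akm by (rule dvd_trans)
  obtain G0 where G0: "G0 \<subseteq> S" "finite G0" "card G0 \<le> n" "generates m n G0 S"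
    using upper[OF m, of n E lab] unfolding S_def by blast
  have ex: "\<exists>G. G \<subseteq> S \<and> finite G \<and> card G = card G0 \<and> generates m n G S" using G0 by blast
  have le: "rk m n S \<le> n"
    unfolding rk_def
    using Least_le[of "\<lambda>t. \<exists>G. G \<subseteq> S \<and> finite G \<and> card G = t \<and> generates m n G S" "card G0", OF ex] G0(3)
    by linarith
  obtain G where G: "G \<subseteq> S" "finite G" "card G = rk m n S" "generates m n G S"
    using LeastI_ex[of "\<lambda>t. \<exists>G. G \<subseteq> S \<and> finite G \<and> card G = t \<and> generates m n G S"] ex
    unfolding rk_def by blast
  have "n \<le> card G"
    by (rule lower[OF m a1 adm labdvd]) (use G S_def in auto)
  then have "rk m n S = n" using le G(3) by simp
  then show ?thesis unfolding S_def lab_def .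
qed

end
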